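(* Let $t,t'$ be even integers and let $B'\in\mathcal X^{t',-}_{N-2}$, $B\in\mathcal X^{t,-}_{N-2}$ with $B'\preceq B$. If $t\ge0$, then $t'=t$ or $|t'+1|<|t+1|$.
   Context: Let $N\ge 3$ be an odd integer and $F=\mathbb Z/2\mathbb Z$. For integers $i,j$ let $[i,j]=\{h\in\mathbb Z: i\le h\le j\}$ (empty if $i>j$). Let $S_N=[1,N]$. The set of all subsets of $S_N$ is an $F$-vector space with sum $X+X'=(X\cup X')-(X\cap X')$; let $E_N$ be the subspace of subsets of even cardinality. A $2$-element subset $\{i,j\}\subseteq S_N$ is written $ij$ when either ($i<j$ and $j-i$ odd) or ($i>j$ and $i-j$ even); each $2$-element subset has exactly one such writing. Let $\mathcal P_N$ be the set of all finite sets $B$ of pairwise disjoint $2$-element subsets of $S_N$; for $B\in\mathcal P_N$ let $\langle B\rangle$ be the $F$-subspace of $E_N$ spanned by the elements of $B$, $\mathrm{supp}(B)=\bigcup_{X\in B}X$, $B^0=\{\{i,j\}\in B: i-j\text{ even}\}$, $B^1=\{\{i,j\}\in B: i-j\text{ odd}\}$. A set $X\subseteq S_N$ is $0$-covered (resp. $1$-covered) by $B^1$ if there are $a_1b_1,\dots,a_sb_s\in B^1$ ($s\ge 0$, so $a_r<b_r$) with $X=[a_1,b_1]\sqcup\dots\sqcup[a_s,b_s]$ (resp. $X=[a_1,b_1]\sqcup\dots\sqcup[a_s,b_s]\sqcup\{u\}$ for some $u$), disjoint unions. Let ${}^*\mathcal P_N$ be the set of $B\in\mathcal P_N$ such that: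 for every $ij\in B^1$ the set $[i+1,j-1]$ is $0$-covered by $B^1$; and there is a sequence $i_*(B)=(i_1,\dots,i_{2s})$ in $S_N$ with $B^0=\{i_{2s}i_1,i_{2s-1}i_2,\dots,i_{s+1}i_s\}$ (so $s=|B^0|$; the sequence is unique) such that, if $s\ge1$, each of $[i_1+1,i_2-1],\dots,[i_{s-1}+1,i_s-1],[i_{s+1}+1,i_{s+2}-1],\dots,[i_{2s-1}+1,i_{2s}-1]$ is $0$-covered by $B^1$. For $B\in{}^*\mathcal P_N$ with $i_*(B)=(i_1,\dots,i_{2s})$ consider: (I) $s=0$, or $s\ge1$ and $[1,i_1-1]$ and $[i_{2s}+1,N]$ are $0$-covered by $B^1$; (II) $N\notin\mathrm{supp}(B)$ and either $s=0$, or $s$ is odd and either (i) $[1,i_1-1]$ is $1$-covered and $[i_{2s}+1,N-1]$ is $0$-covered by $B^1$, or (ii) $[1,i_1-1]$ is $0$-covered and $[i_{2s}+1,N-1]$ is $1$-covered by $B^1$; (III) (I) holds and, if $s$ is even then $\{i,N\}\in B$ for some even $i$, if $s$ is odd then $\{i,N\}\in B$ for some odd $i$. Let $\mathcal X^+_{N-2}$, $\mathcal X^-_{N-2}$ be the sets of $B\in{}^*\mathcal P_N$ satisfying (II), (III) respectively, and $\mathcal X_{N-2}=\mathcal X^+_{N-2}\sqcup\mathcal X^-_{N-2}$. For $B\in\mathcal X^+_{N-2}$ with $s\ge1$ there is a unique $u_B$: in case (i), $u_B\in[1,i_1-1]$ with $[1,u_B-1]$, $[u_B+1,i_1-1]$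 $0$-covered by $B^1$ ($u_B$ odd); in case (ii), $u_B\in[i_{2s}+1,N-1]$ with $[i_{2s}+1,u_B-1]$, $[u_B+1,N-1]$ $0$-covered by $B^1$ ($u_B$ even). For even $t$: $\mathcal X^{0,-}_{N-2}=\{B\in\mathcal X^-_{N-2}:|B^0|=0\}$; for $t\ge2$, $\mathcal X^{t,-}_{N-2}=\{B\in\mathcal X^-_{N-2}:|B^0|=t,\ \{i,N\}\in B\text{ for some even }i\}$; for $t\le -2$, $\mathcal X^{t,-}_{N-2}=\{B\in\mathcal X^-_{N-2}:|B^0|=-t-1,\ \{i,N\}\in B\text{ for some odd }i\}$. Put $[[ij]]=[i,j]$ if $i<j$ and $[[ij]]=[i,N]\cup[1,j]$ if $i>j$. For $B\in\mathcal X_{N-2}$ define ${}'\epsilon(B)\in E_N$: ${}'\epsilon(B)=\sum_{ij\in B}[[ij]]$ if $B\in\mathcal X^-_{N-2}$ or if $B\in\mathcal X^+_{N-2}$ with $|B^0|=0$; ${}'\epsilon(B)=\sum_{ij\in B}[[ij]]+[u_B,N]$ if $B\in\mathcal X^+_{N-2}$, $|B^0|$ odd, $u_B$ even; ${}'\epsilon(B)=\sum_{ij\in B}[[ij]]+\{N\}+[1,u_B]$ if $B\in\mathcal X^+_{N-2}$, $|B^0|$ odd, $u_B$ odd. For $B,B'\in\mathcal X_{N-2}$ write $B'\preceq B$ if there is a sequence $B'=B_0,\dots,B_h=B$ ($h\ge0$) in $\mathcal X_{N-2}$ with ${}'\epsilon(B_k)\in\langle B_{k+1}\rangle$ for $k=0,\dots,h-1$.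 *)

theory Defs
  imports Main
begin

definition SN :: "nat \<Rightarrow> nat set" where "SN N = {1..N}"

definition symd :: "nat set \<Rightarrow> nat set \<Rightarrow> nat set" where
  "symd X Y = (X - Y) \<union> (Y - X)"

text \<open>F_2-sum of a finite family: h belongs to it iff it lies in an odd number of members.\<close>
definition fsum :: "('a \<Rightarrow> nat set) \<Rightarrow> 'a set \<Rightarrow> nat set" where
  "fsum f A = {h. odd (card {x\<in>A. h \<in> f x})}"

definition span2 :: "nat set set \<Rightarrow> nat set set" where
  "span2 B = {fsum id C | C. C \<subseteq> B}"

definition wr :: "nat \<Rightarrow> nat \<Rightarrow> bool" where
  "wr i j \<longleftrightarrow> (i < j \<and> odd (j - i)) \<or> (j < i \<and> even (i - j))"

definition inP :: "nat \<Rightarrow> nat set set \<Rightarrow> bool" where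
  "inP N B \<longleftrightarrow> finite B \<and> (\<forall>p\<in>B. p \<subseteq> SN N \<and> card p = 2)
     \<and> (\<forall>p\<in>B. \<forall>q\<in>B. p \<noteq> q \<longrightarrow> p \<inter> q = {})"

definition B0 :: "nat set set \<Rightarrow> nat set set" where
  "B0 B = {p\<in>B. \<exists>i j. p = {i,j} \<and> i \<noteq> j \<and> even (int i - int j)}"

definition B1 :: "nat set set \<Rightarrow> nat set set" where
  "B1 B = {p\<in>B. \<exists>i j. p = {i,j} \<and> i \<noteq> j \<and> odd (int i - int j)}"

definition ival :: "nat set \<Rightarrow> nat set" where
  "ival p = {Min p..Max p}"

definition cov0 :: "nat set set \<Rightarrow> nat set \<Rightarrow> bool" where
  "cov0 B X \<longleftrightarrow> (\<exists>C. C \<subseteq> B1 B \<and> (\<forall>p\<in>C. \<forall>q\<in>C. p \<noteq> q \<longrightarrow> ival p \<inter> ival q = {})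
      \<and> X = \<Union>(ival ` C))"

definition cov1 :: "nat set set \<Rightarrow> nat set \<Rightarrow> bool" where
  "cov1 B X \<longleftrightarrow> (\<exists>C u. C \<subseteq> B1 B \<and> (\<forall>p\<in>C. \<forall>q\<in>C. p \<noteq> q \<longrightarrow> ival p \<inter> ival q = {})
      \<and> u \<notin> \<Union>(ival ` C) \<and> X = \<Union>(ival ` C) \<union> {u})"

text \<open>Admissible sequences i_*(B) = (i_1,...,i_2s), stored 0-based: i_k = xs ! (k-1).
  The sequence is taken strictly increasing (this is what makes it unique).\<close>
definition seqOK :: "nat \<Rightarrow> nat set set \<Rightarrow> nat list \<Rightarrow> bool" where
  "seqOK N B xs \<longleftrightarrow> (let s = card (B0 B) in
      length xs = 2 * s \<and> set xs \<subseteq> SN N \<and> sorted_wrt (<) xs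
    \<and> B0 B = {{xs ! (2*s - 1 - k), xs ! k} | k. k < s}
    \<and> (\<forall>k<s. wr (xs ! (2*s - 1 - k)) (xs ! k))
    \<and> (\<forall>k. k + 1 < s \<longrightarrow> cov0 B {xs ! k + 1 .. xs ! (k+1) - 1})
    \<and> (\<forall>k. s \<le> k \<and> k + 1 < 2*s \<longrightarrow> cov0 B {xs ! k + 1 .. xs ! (k+1) - 1}))"

definition iseq :: "nat \<Rightarrow> nat set set \<Rightarrow> nat list" where
  "iseq N B = (THE xs. seqOK N B xs)"

definition starP :: "nat \<Rightarrow> nat set set \<Rightarrow> bool" where
  "starP N B \<longleftrightarrow> inP N B
     \<and> (\<forall>p\<in>B1 B. cov0 B {Min p + 1 .. Max p - 1})
     \<and> (\<exists>xs. seqOK N B xs)"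

definition condI :: "nat \<Rightarrow> nat set set \<Rightarrow> bool" where
  "condI N B \<longleftrightarrow> (let s = card (B0 B); xs = iseq N B in
     s = 0 \<or> (s \<ge> 1 \<and> cov0 B {1 .. xs ! 0 - 1} \<and> cov0 B {xs ! (2*s - 1) + 1 .. N}))"

definition caseI :: "nat \<Rightarrow> nat set set \<Rightarrow> bool" where
  "caseI N B \<longleftrightarrow> (let s = card (B0 B); xs = iseq N B in
     cov1 B {1 .. xs ! 0 - 1} \<and> cov0 B {xs ! (2*s - 1) + 1 .. N - 1})"

definition caseII :: "nat \<Rightarrow> nat set set \<Rightarrow> bool" where
  "caseII N B \<longleftrightarrow> (let s = card (B0 B); xs = iseq N B in
     cov0 B {1 .. xs ! 0 - 1} \<and> cov1 B {xs ! (2*s - 1) + 1 .. N - 1})"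

definition condII :: "nat \<Rightarrow> nat set set \<Rightarrow> bool" where
  "condII N B \<longleftrightarrow> N \<notin> \<Union>B \<and>
     (card (B0 B) = 0 \<or> (odd (card (B0 B)) \<and> (caseI N B \<or> caseII N B)))"

definition condIII :: "nat \<Rightarrow> nat set set \<Rightarrow> bool" where
  "condIII N B \<longleftrightarrow> condI N B
     \<and> (even (card (B0 B)) \<longrightarrow> (\<exists>i. even i \<and> {i, N} \<in> B))
     \<and> (odd (card (B0 B)) \<longrightarrow> (\<exists>i. odd i \<and> {i, N} \<in> B))"

definition Xp :: "nat \<Rightarrow> nat set set set" where
  "Xp N = {B. starP N B \<and> condII N B}"

definition Xm :: "nat \<Rightarrow> nat set set set" where
  "Xm N = {B. starP N B \<and> condIII N B}"

definition XX :: "nat \<Rightarrow> nat set set set" where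
  "XX N = Xp N \<union> Xm N"

definition Xtm :: "nat \<Rightarrow> int \<Rightarrow> nat set set set" where
  "Xtm N t = (if t = 0 then {B\<in>Xm N. card (B0 B) = 0}
     else if t \<ge> 2 then {B\<in>Xm N. int (card (B0 B)) = t \<and> (\<exists>i. even i \<and> {i, N} \<in> B)}
     else if t \<le> -2 then {B\<in>Xm N. int (card (B0 B)) = - t - 1 \<and> (\<exists>i. odd i \<and> {i, N} \<in> B)}
     else {})"

definition uB :: "nat \<Rightarrow> nat set set \<Rightarrow> nat" where
  "uB N B = (let s = card (B0 B); xs = iseq N B in
     if caseI N B then
       (THE u. u \<in> {1 .. xs ! 0 - 1} \<and> cov0 B {1 .. u - 1} \<and> cov0 B {u + 1 .. xs ! 0 - 1})
     else
       (THE u. u \<in> {xs ! (2*s - 1) + 1 .. N - 1} \<and> cov0 B {xs ! (2*s - 1) + 1 .. u - 1}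
          \<and> cov0 B {u + 1 .. N - 1}))"

definition dbr :: "nat \<Rightarrow> nat \<Rightarrow> nat \<Rightarrow> nat set" where
  "dbr N i j = (if i < j then {i..j} else {i..N} \<union> {1..j})"

definition eps :: "nat \<Rightarrow> nat set set \<Rightarrow> nat set" where
  "eps N B = (let S = fsum (\<lambda>(i,j). dbr N i j) {(i,j). {i,j} \<in> B \<and> wr i j}; u = uB N B in
     if B \<in> Xm N \<or> card (B0 B) = 0 then S
     else if even u then symd S {u..N}
     else symd (symd S {N}) {1..u})"

definition preceq :: "nat \<Rightarrow> nat set set \<Rightarrow> nat set set \<Rightarrow> bool" where
  "preceq N B' B \<longleftrightarrow> B' \<in> XX N \<and> B \<in> XX N \<and>
     (\<lambda>X Y. X \<in> XX N \<and> Y \<in> XX N \<and> eps N X \<in> span2 Y)\<^sup>*\<^sup>* B' B"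

end

theory Submission
  imports Defs
begin



definition alt :: "nat set \<Rightarrow> int" where "alt E = (\<Sum>h\<in>E. (-1::int)^h)"

definition arc :: "nat \<Rightarrow> nat set \<Rightarrow> nat set" where
  "arc N p = (if odd (Max p - Min p) then {Min p..Max p} else {Max p..N} \<union> {1..Min p})"

lemma pair_form:
  assumes "inP N X" "p \<in> X"
  shows "\<exists>a b. a < b \<and> p = {a,b} \<and> 1 \<le> a \<and> b \<le> N"
proof -
  from assms have c: "card p = 2" and sub: "p \<subseteq> SN N" unfolding inP_def by auto
  then obtain x y where xy: "p = {x,y}" "x \<noteq> y" by (auto simp: card_2_iff)
  show ?thesis
  proof (cases "x < y")
    case True thus ?thesis using xy sub by (auto simp: SN_def)
  next
    case False thus ?thesis using xy sub by (intro exI[of _ y] exI[of _ x]) (auto simp: SN_def)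
  qed
qed

lemma doubleton_par:
  assumes "{i,j} = {a,b}" "(a::nat) < b"
  shows "even (int i - int j) \<longleftrightarrow> even (b - a)"
proof -
  from assms have "(i = a \<and> j = b) \<or> (i = b \<and> j = a)" by (auto simp: doubleton_eq_iff)
  thus ?thesis using assms(2)
    by (auto simp: even_diff_nat[symmetric])
qed

lemma B0_iff:
  assumes "(a::nat) < b"
  shows "{a,b} \<in> B0 X \<longleftrightarrow> {a,b} \<in> X \<and> even (b - a)"
  unfolding B0_def using doubleton_par[OF _ assms] assms
  by auto

lemma B1_iff:
  assumes "(a::nat) < b"
  shows "{a,b} \<in> B1 X \<longleftrightarrow> {a,b} \<in> X \<and> odd (b - a)"
  unfolding B1_def using doubleton_par[OF _ assms] assms
  by auto

lemma B01_sub: "B0 X \<subseteq> X" "B1 X \<subseteq> X" by (auto simp: B0_def B1_def)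

lemma B01_disj: "B0 X \<inter> B1 X = {}" by (auto simp: B0_def B1_def doubleton_eq_iff)

lemma B01_cover:
  assumes "inP N X" shows "X = B0 X \<union> B1 X"
proof
  show "X \<subseteq> B0 X \<union> B1 X"
  proof
    fix p assume p: "p \<in> X"
    then obtain a b where ab: "a < b" "p = {a,b}" using pair_form[OF assms] by blast
    thus "p \<in> B0 X \<union> B1 X" using B0_iff[OF ab(1)] B1_iff[OF ab(1)] p by auto
  qed
qed (use B01_sub in auto)

lemma fsum_disj:
  assumes "finite C" "\<forall>p\<in>C. \<forall>q\<in>C. p \<noteq> q \<longrightarrow> p \<inter> q = {}"
  shows "fsum id C = \<Union>C"
proof -
  have "h \<in> fsum id C \<longleftrightarrow> h \<in> \<Union>C" for h
  proof (cases "h \<in> \<Union>C")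
    case True
    then obtain x where x: "x \<in> C" "h \<in> x" by auto
    hence "{x\<in>C. h \<in> id x} = {x}" using assms(2) by auto
    thus ?thesis using True by (simp add: fsum_def)
  next
    case False
    hence "{x\<in>C. h \<in> id x} = {}" by auto
    hence "card {x\<in>C. h \<in> id x} = 0" by (simp only: card.empty)
    thus ?thesis using False unfolding fsum_def by (metis (no_types, lifting) even_zero mem_Collect_eq)
  qed
  thus ?thesis by auto
qed

lemma cov0_even:
  assumes "inP N X" "cov0 X Y"
  shows "finite Y \<and> even (card Y)"
proof -
  from assms(2) obtain C where C: "C \<subseteq> B1 X" "\<forall>p\<in>C. \<forall>q\<in>C. p \<noteq> q \<longrightarrow> ival p \<inter> ival q = {}"
     "Y = \<Union>(ival ` C)" unfolding cov0_def by blast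
  have fC: "finite C" using C(1) B01_sub(2)[of X] assms(1) unfolding inP_def by (meson finite_subset)
  have ev: "even (card (ival p))" if "p \<in> C" for p
  proof -
    have pX: "p \<in> X" using that C(1) B01_sub by blast
    obtain a b where ab: "a < b" "p = {a,b}" using pair_form[OF assms(1) pX] by blast
    have "odd (b - a)" using B1_iff[OF ab(1)] that C(1) ab by auto
    moreover have "ival p = {a..b}" using ab by (simp add: ival_def)
    ultimately show ?thesis using ab by auto
  qed
  have "card Y = (\<Sum>p\<in>C. card (ival p))" unfolding C(3)
    by (rule card_UN_disjoint) (use fC C(2) in \<open>auto simp: ival_def\<close>)
  moreover have "finite Y" unfolding C(3) using fC by (auto simp: ival_def)
  ultimately show ?thesis using ev by (simp add: dvd_sum)
qed

lemma seq_union: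
  assumes "seqOK N X xs"
  shows "set xs = \<Union>(B0 X)"
proof -
  let ?s = "card (B0 X)"
  have L: "length xs = 2 * ?s" and E: "B0 X = {{xs ! (2*?s - 1 - k), xs ! k} | k. k < ?s}"
    using assms unfolding seqOK_def Let_def by auto
  show ?thesis
  proof
    show "set xs \<subseteq> \<Union>(B0 X)"
    proof
      fix x assume "x \<in> set xs"
      then obtain m where m: "m < 2 * ?s" "x = xs ! m" using L by (auto simp: in_set_conv_nth)
      show "x \<in> \<Union>(B0 X)"
      proof (cases "m < ?s")
        case True thus ?thesis using m E by blast
      next
        case False
        hence "2*?s - 1 - (2*?s - 1 - m) = m" "2*?s - 1 - m < ?s" using m by auto
        thus ?thesis using m E by (smt (verit) Union_iff insert_iff mem_Collect_eq)
      qed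
    qed
    show "\<Union>(B0 X) \<subseteq> set xs"
    proof
      fix x assume "x \<in> \<Union>(B0 X)"
      then obtain k where k: "k < ?s" "x = xs ! (2*?s - 1 - k) \<or> x = xs ! k" using E by auto
      have "2*?s - 1 - k < length xs" "k < length xs" using k L by auto
      thus "x \<in> set xs" using k by auto
    qed
  qed
qed

lemma seq_unique:
  assumes "seqOK N X xs" "seqOK N X ys" shows "xs = ys"
  using strict_sorted_equal[of ys xs] seq_union[OF assms(1)] seq_union[OF assms(2)] assms
  unfolding seqOK_def Let_def by auto

lemma iseq_eq: "seqOK N X xs \<Longrightarrow> iseq N X = xs"
  unfolding iseq_def using seq_unique by blast




lemma B1_form:
  assumes "inP N X" "p \<in> B1 X"
  shows "\<exists>a b. a < b \<and> p = {a,b} \<and> odd (b - a) \<and> Min p = a \<and> Max p = b \<and> ival p = {a..b}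
     \<and> 1 \<le> a \<and> b \<le> N"
proof -
  obtain a b where ab: "a < b" "p = {a,b}" "1 \<le> a" "b \<le> N"
    using pair_form[OF assms(1)] assms(2) B01_sub by blast
  thus ?thesis using B1_iff[OF ab(1)] assms(2) by (auto simp: ival_def)
qed

locale good =
  fixes N :: nat and X :: "nat set set" and xs :: "nat list" and s :: nat
  assumes inP: "inP N X"
  and b1cov: "\<And>p. p\<in>B1 X \<Longrightarrow> cov0 X {Min p + 1 .. Max p - 1}"
  and sq: "seqOK N X xs"
  and s_def: "s = card (B0 X)"
  and lcov: "s \<ge> 1 \<Longrightarrow> cov0 X {1 .. xs!0 - 1}"
  and rcov: "s \<ge> 1 \<Longrightarrow> cov0 X {xs!(2*s-1)+1 .. N}"
begin

lemma len: "length xs = 2*s" using sq s_def unfolding seqOK_def Let_def by auto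
lemma srt: "sorted_wrt (<) xs" using sq unfolding seqOK_def Let_def by auto
lemma setN: "set xs \<subseteq> SN N" using sq unfolding seqOK_def Let_def by auto
lemma B0eq: "B0 X = {{xs ! (2*s - 1 - k), xs ! k} | k. k < s}"
  using sq s_def unfolding seqOK_def Let_def by auto
lemma gap1: "k+1 < s \<Longrightarrow> cov0 X {xs!k+1 .. xs!(k+1) - 1}"
  using sq s_def unfolding seqOK_def Let_def by auto
lemma gap2: "s \<le> k \<Longrightarrow> k+1 < 2*s \<Longrightarrow> cov0 X {xs!k+1 .. xs!(k+1)-1}"
  using sq s_def unfolding seqOK_def Let_def by auto

lemma finX: "finite X" using inP unfolding inP_def by auto
lemma disjX: "p \<in> X \<Longrightarrow> q \<in> X \<Longrightarrow> p \<noteq> q \<Longrightarrow> p \<inter> q = {}"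
  using inP unfolding inP_def by auto

lemma less_iff: "i < 2*s \<Longrightarrow> j < 2*s \<Longrightarrow> xs!i < xs!j \<longleftrightarrow> i < j"
  using sorted_wrt_nth_less[OF srt, of i j] sorted_wrt_nth_less[OF srt, of j i] len
  by (metis less_asym' linorder_neqE_nat)
lemma le_iff: "i < 2*s \<Longrightarrow> j < 2*s \<Longrightarrow> xs!i \<le> xs!j \<longleftrightarrow> i \<le> j"
  using less_iff by (meson linorder_not_less)
lemma nth_N: "i < 2*s \<Longrightarrow> 1 \<le> xs!i \<and> xs!i \<le> N"
proof -
  assume "i < 2*s"
  hence "xs!i \<in> set xs" using len by auto
  thus ?thesis using setN by (auto simp: SN_def)
qed

definition pr :: "nat \<Rightarrow> nat set" where "pr k = {xs!(2*s-1-k), xs!k}"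

lemma B0_img: "B0 X = pr ` {..<s}" unfolding B0eq pr_def by auto

lemma pr_lt: "k < s \<Longrightarrow> xs!k < xs!(2*s-1-k)" using less_iff by auto

lemma pr_B0: "k < s \<Longrightarrow> pr k \<in> B0 X" using B0_img by auto
lemma pr_X: "k < s \<Longrightarrow> pr k \<in> X" using pr_B0 B01_sub by blast
lemma pr_even: "k < s \<Longrightarrow> even (xs!(2*s-1-k) - xs!k)"
  using pr_B0 B0_iff[OF pr_lt] unfolding pr_def by (metis insert_commute)

lemma pr_inj: "inj_on pr {..<s}"
proof
  fix k k' assume k: "k \<in> {..<s}" "k' \<in> {..<s}" "pr k = pr k'"
  hence "xs!k \<in> pr k'" unfolding pr_def by auto
  hence "xs!k = xs!(2*s-1-k') \<or> xs!k = xs!k'" unfolding pr_def by auto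
  thus "k = k'"
  proof
    assume "xs!k = xs!(2*s-1-k')"
    moreover have a: "k < 2*s" "2*s-1-k' < 2*s" using k by auto
    ultimately have "k = 2*s-1-k'" using less_iff[OF a] less_iff[OF a(2) a(1)]
      by (metis less_irrefl nat_neq_iff)
    thus ?thesis using k by auto
  next
    assume "xs!k = xs!k'"
    moreover have a: "k < 2*s" "k' < 2*s" using k by auto
    ultimately show ?thesis using less_iff[OF a] less_iff[OF a(2) a(1)]
      by (metis less_irrefl nat_neq_iff)
  qed
qed

end


context good begin
lemma L2:
  assumes "p \<in> B1 X" "x \<in> ival p"
  shows "(\<exists>q\<in>B1 X. x \<in> q) \<and> (\<forall>q\<in>X. x \<in> q \<longrightarrow> q \<subseteq> ival p)"
  using assms
proof (induction "Max p - Min p" arbitrary: p rule: less_induct)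
  case less
  obtain a b where ab: "a < b" "p = {a,b}" "Min p = a" "Max p = b" "ival p = {a..b}"
    using B1_form[OF inP less.prems(1)] by blast
  have pX: "p \<in> X" using less.prems(1) B01_sub by blast
  show ?case
  proof (cases "x \<in> p")
    case True
    have "\<forall>q\<in>X. x \<in> q \<longrightarrow> q \<subseteq> ival p"
    proof (intro ballI impI)
      fix q assume q: "q \<in> X" "x \<in> q"
      hence "q = p" using disjX[OF q(1) pX] True by blast
      thus "q \<subseteq> ival p" using ab by auto
    qed
    thus ?thesis using True less.prems(1) by blast
  next
    case False
    hence xin: "x \<in> {Min p + 1 .. Max p - 1}" using less.prems(2) ab by auto
    from b1cov[OF less.prems(1)] obtain C where C: "C \<subseteq> B1 X"
      "{Min p + 1 .. Max p - 1} = \<Union>(ival ` C)" unfolding cov0_def by metis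
    then obtain r where r: "r \<in> C" "x \<in> ival r" using xin by auto
    have rB: "r \<in> B1 X" using r C by auto
    obtain c d where cd: "c < d" "r = {c,d}" "Min r = c" "Max r = d" "ival r = {c..d}"
      using B1_form[OF inP rB] by blast
    have sub: "ival r \<subseteq> {Min p + 1 .. Max p - 1}" using C r by auto
    hence "a + 1 \<le> c" "d \<le> b - 1" using cd ab by auto
    hence lt: "Max r - Min r < Max p - Min p" using cd ab by auto
    have "{Min p + 1 .. Max p - 1} \<subseteq> ival p" unfolding ab(3,4,5) by auto
    hence "ival r \<subseteq> ival p" using sub by blast
    then show ?thesis using less.hyps[OF lt rB r(2)] by blast
  qed
qed

lemma cov0_B1:
  assumes "cov0 X Y" "h \<in> Y" shows "\<exists>q\<in>B1 X. h \<in> q"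
proof -
  from assms(1) obtain C where C: "C \<subseteq> B1 X" "Y = \<Union>(ival ` C)" unfolding cov0_def by metis
  then obtain r where r: "r \<in> C" "h \<in> ival r" using assms(2) by auto
  have "r \<in> B1 X" using r C by auto
  thus ?thesis using L2 r(2) by meson
qed

lemma B0_not_ival:
  assumes "q \<in> B0 X" "z \<in> q" "p \<in> B1 X" shows "z \<notin> ival p"
proof
  assume "z \<in> ival p"
  then obtain r where r: "r \<in> B1 X" "z \<in> r" using L2[OF assms(3)] by meson
  have "r \<noteq> q" using r(1) assms(1) B01_disj by blast
  moreover have "r \<in> X" "q \<in> X" using r(1) assms(1) B01_sub by auto
  ultimately have "r \<inter> q = {}" using disjX by meson
  thus False using r(2) assms(2) by blast
qed

lemma cover_lo: "k < s \<Longrightarrow> 1 \<le> h \<Longrightarrow> h \<le> xs!k \<Longrightarrow> h \<in> \<Union>X"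
proof (induction k arbitrary: h)
  case 0
  show ?case
  proof (cases "h = xs!0")
    case True thus ?thesis using pr_X[OF 0(1)] unfolding pr_def by blast
  next
    case False
    hence "h \<in> {1..xs!0 - 1}" using 0 by auto
    then obtain q where "q \<in> B1 X" "h \<in> q" using cov0_B1[OF lcov] 0(1) by fastforce
    thus ?thesis using B01_sub(2)[of X] by blast
  qed
next
  case (Suc k)
  show ?case
  proof (cases "h \<le> xs!k")
    case True thus ?thesis using Suc by auto
  next
    case False
    show ?thesis
    proof (cases "h = xs!(Suc k)")
      case True thus ?thesis using pr_X[OF Suc(2)] unfolding pr_def by blast
    next
      case F2: False
      hence "h \<in> {xs!k+1 .. xs!(k+1) - 1}" using False Suc by auto
      thus ?thesis using cov0_B1[OF gap1] Suc(2) B01_sub by (metis Suc_eq_plus1 UnionI subsetD)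
    qed
  qed
qed

lemma cover_hi: "k < s \<Longrightarrow> xs!(2*s-1-k) \<le> h \<Longrightarrow> h \<le> N \<Longrightarrow> h \<in> \<Union>X"
proof (induction k arbitrary: h)
  case 0
  show ?case
  proof (cases "h = xs!(2*s-1)")
    case True thus ?thesis using pr_X[OF 0(1)] unfolding pr_def by auto
  next
    case False
    hence "h \<in> {xs!(2*s-1)+1 .. N}" using 0 by auto
    then obtain q where "q \<in> B1 X" "h \<in> q" using cov0_B1[OF rcov] 0(1) by fastforce
    thus ?thesis using B01_sub(2)[of X] by blast
  qed
next
  case (Suc k)
  define m where "m = 2*s-1-Suc k"
  have m1: "m + 1 = 2*s-1-k" "s \<le> m" "m+1 < 2*s" using Suc(2) unfolding m_def by auto
  show ?case
  proof (cases "xs!(2*s-1-k) \<le> h")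
    case True thus ?thesis using Suc by auto
  next
    case False
    show ?thesis
    proof (cases "h = xs!m")
      case True thus ?thesis using pr_X[OF Suc(2)] unfolding pr_def m_def by auto
    next
      case F2: False
      hence "h \<in> {xs!m+1 .. xs!(m+1) - 1}" using False Suc m1 unfolding m_def by auto
      thus ?thesis using cov0_B1[OF gap2[OF m1(2,3)]] B01_sub by blast
    qed
  qed
qed

lemma parity: "k < s \<Longrightarrow> odd (xs!k) \<longleftrightarrow> even k"
proof (induction k)
  case 0
  have "even (card {1..xs!0 - 1})" using cov0_even[OF inP lcov] 0 by auto
  moreover have "xs!0 \<ge> 1" using nth_N[of 0] 0 by auto
  ultimately show ?case by auto
next
  case (Suc k)
  have "even (card {xs!k+1 .. xs!(k+1) - 1})" using cov0_even[OF inP gap1] Suc(2) by auto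
  moreover have "xs!k < xs!(Suc k)" using less_iff[of k "Suc k"] Suc(2) by auto
  ultimately have o: "odd (xs!(Suc k) - xs!k)" by auto
  have ih: "odd (xs ! k) = even k" using Suc by auto
  have "odd (xs!(Suc k)) \<longleftrightarrow> even (xs!k)"
    using o \<open>xs!k < xs!(Suc k)\<close> by (auto simp: even_diff_nat)
  thus ?case using ih by auto
qed

end



definition cntX :: "nat \<Rightarrow> nat set set \<Rightarrow> nat \<Rightarrow> nat" where
  "cntX N X h = card {p\<in>X. h \<in> arc N p}"

lemma wr_not_both: "wr i j \<Longrightarrow> wr j i \<Longrightarrow> False"
  unfolding wr_def by auto

lemma dbr_arc: "wr i j \<Longrightarrow> dbr N i j = arc N {i,j}"
proof -
  assume w: "wr i j"
  show ?thesis
  proof (cases "i < j")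
    case True
    hence "odd (j - i)" using w unfolding wr_def by auto
    thus ?thesis using True unfolding dbr_def arc_def by (auto simp: min_def max_def)
  next
    case False
    hence ji: "j < i" "even (i - j)" using w unfolding wr_def by auto
    thus ?thesis using False unfolding dbr_def arc_def by (auto simp: min_def max_def)
  qed
qed

lemma card_writings:
  assumes "inP N X"
  shows "card {x \<in> {(i,j). {i,j} \<in> X \<and> wr i j}. h \<in> (case x of (i,j) \<Rightarrow> dbr N i j)}
     = cntX N X h"
proof -
  let ?A = "{x \<in> {(i,j). {i,j} \<in> X \<and> wr i j}. h \<in> (case x of (i,j) \<Rightarrow> dbr N i j)}"
  let ?f = "\<lambda>(i,j). {i,j::nat}"
  have inj: "inj_on ?f ?A"
  proof (rule inj_onI)
    fix x y assume x: "x \<in> ?A" and y: "y \<in> ?A" and e: "?f x = ?f y"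
    obtain i j where ij: "x = (i,j)" by (cases x)
    obtain i' j' where ij': "y = (i',j')" by (cases y)
    have w: "wr i j" "wr i' j'" using x y ij ij' by auto
    from e ij ij' have "{i,j} = {i',j'}" by auto
    hence "(i = i' \<and> j = j') \<or> (i = j' \<and> j = i')" by (auto simp: doubleton_eq_iff)
    thus "x = y" using w wr_not_both ij ij' by blast
  qed
  have img: "?f ` ?A = {p\<in>X. h \<in> arc N p}"
  proof
    show "?f ` ?A \<subseteq> {p\<in>X. h \<in> arc N p}"
    proof
      fix p assume "p \<in> ?f ` ?A"
      then obtain i j where ij: "(i,j) \<in> ?A" "p = {i,j}" by auto
      hence "{i,j} \<in> X" "wr i j" "h \<in> dbr N i j" by auto
      thus "p \<in> {p\<in>X. h \<in> arc N p}" using ij(2) dbr_arc[of i j N] by simp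
    qed
    show "{p\<in>X. h \<in> arc N p} \<subseteq> ?f ` ?A"
    proof
      fix p assume p: "p \<in> {p\<in>X. h \<in> arc N p}"
      then obtain a b where ab: "a < b" "p = {a,b}" using pair_form[OF assms] by blast
      show "p \<in> ?f ` ?A"
      proof (cases "odd (b - a)")
        case True
        hence "wr a b" using ab unfolding wr_def by auto
        moreover have "h \<in> dbr N a b" using p ab dbr_arc[OF \<open>wr a b\<close>] by simp
        ultimately have "(a,b) \<in> ?A" using p ab by simp
        thus ?thesis using ab(2) by (metis (no_types, lifting) case_prod_conv image_eqI)
      next
        case False
        hence "wr b a" using ab unfolding wr_def by auto
        moreover have "h \<in> dbr N b a" using p ab dbr_arc[OF \<open>wr b a\<close>] by (simp add: insert_commute)
        ultimately have "(b,a) \<in> ?A" using p ab by (simp add: insert_commute)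
        thus ?thesis using ab(2) by (metis (no_types, lifting) case_prod_conv image_eqI insert_commute)
      qed
    qed
  qed
  show ?thesis unfolding cntX_def using card_image[OF inj] img by simp
qed

lemma eps_Xm:
  assumes "X \<in> Xm N"
  shows "eps N X = {h. odd (cntX N X h)}"
proof -
  have "inP N X" using assms unfolding Xm_def starP_def by auto
  thus ?thesis using assms card_writings unfolding eps_def Let_def fsum_def by simp
qed


context good begin

lemma arc_B1: "p \<in> B1 X \<Longrightarrow> arc N p = ival p"
proof -
  assume p: "p \<in> B1 X"
  obtain a b where ab: "a < b" "p = {a,b}" "odd (b - a)" "Min p = a" "Max p = b" "ival p = {a..b}"
    using B1_form[OF inP p] by blast
  show ?thesis unfolding arc_def using ab(3-6) by simp
qed

lemma pr_minmax: "k < s \<Longrightarrow> Min (pr k) = xs!k \<and> Max (pr k) = xs!(2*s-1-k)"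
  using pr_lt unfolding pr_def by auto

lemma mem_arc_pr: "k < s \<Longrightarrow> h \<in> arc N (pr k) \<longleftrightarrow> (xs!(2*s-1-k) \<le> h \<and> h \<le> N) \<or> (1 \<le> h \<and> h \<le> xs!k)"
proof -
  assume k: "k < s"
  have "even (Max (pr k) - Min (pr k))" using pr_minmax[OF k] pr_even[OF k] by simp
  hence "arc N (pr k) = {xs!(2*s-1-k)..N} \<union> {1..xs!k}" unfolding arc_def using pr_minmax[OF k] by simp
  thus ?thesis by auto
qed

lemma X_cases: "q \<in> X \<Longrightarrow> q \<in> B1 X \<or> (\<exists>k<s. q = pr k)"
  using B01_cover[OF inP] B0_img by blast

lemma pr_mem_cases: "k < s \<Longrightarrow> x \<in> pr k \<Longrightarrow> x = xs!k \<or> x = xs!(2*s-1-k)"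
  unfolding pr_def by auto

lemma arc_out:
  assumes "h \<notin> \<Union>X" "q \<in> X" shows "h \<notin> arc N q"
proof
  assume h: "h \<in> arc N q"
  from X_cases[OF assms(2)] show False
  proof
    assume q: "q \<in> B1 X"
    hence "h \<in> ival q" using h arc_B1 by simp
    then obtain r where "r \<in> B1 X" "h \<in> r" using L2[OF q] by meson
    thus False using assms(1) B01_sub(2)[of X] by blast
  next
    assume "\<exists>k<s. q = pr k"
    then obtain k where k: "k < s" "q = pr k" by blast
    hence "(xs!(2*s-1-k) \<le> h \<and> h \<le> N) \<or> (1 \<le> h \<and> h \<le> xs!k)" using h mem_arc_pr by simp
    thus False using cover_hi[OF k(1)] cover_lo[OF k(1)] assms(1) by blast
  qed
qed

lemma mem_pr_pr:
  assumes k: "k < s" and k': "k' < s" and x: "x \<in> pr k'"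
  shows "x \<in> arc N (pr k) \<longleftrightarrow> k' \<le> k"
proof -
  have i1: "k < 2*s" "2*s-1-k < 2*s" "k' < 2*s" "2*s-1-k' < 2*s" using k k' by auto
  have b: "xs!k < xs!(2*s-1-k')" "xs!k' < xs!(2*s-1-k)" using less_iff k k' by auto
  have c1: "xs!k' \<le> xs!k \<longleftrightarrow> k' \<le> k" using le_iff i1 by auto
  have c2: "xs!(2*s-1-k) \<le> xs!(2*s-1-k') \<longleftrightarrow> k' \<le> k" using le_iff[OF i1(2) i1(4)] k k' by auto
  have n: "1 \<le> xs!k'" "xs!(2*s-1-k') \<le> N" using nth_N i1 by auto
  from pr_mem_cases[OF k' x] show ?thesis
  proof
    assume "x = xs!k'"
    thus ?thesis using mem_arc_pr[OF k] b c1 n by auto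
  next
    assume "x = xs!(2*s-1-k')"
    thus ?thesis using mem_arc_pr[OF k] b c2 n by auto
  qed
qed

lemma arc_const:
  assumes p: "p \<in> X" and x: "x \<in> p" and y: "y \<in> p" and q: "q \<in> X"
  shows "x \<in> arc N q \<longleftrightarrow> y \<in> arc N q"
proof (cases "p \<in> B1 X")
  case pB: True
  obtain a b where ab: "a < b" "p = {a,b}" "ival p = {a..b}" "1 \<le> a" "b \<le> N"
    using B1_form[OF inP pB] by blast
  from X_cases[OF q] show ?thesis
  proof
    assume qB: "q \<in> B1 X"
    show ?thesis
    proof (cases "q = p")
      case True thus ?thesis using x y ab arc_B1[OF qB] by auto
    next
      case False
      have "x \<in> ival q \<Longrightarrow> p \<subseteq> ival q" using L2[OF qB] p x by meson
      moreover have "y \<in> ival q \<Longrightarrow> p \<subseteq> ival q" using L2[OF qB] p y by meson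
      ultimately show ?thesis using x y arc_B1[OF qB] by auto
    qed
  next
    assume "\<exists>k<s. q = pr k"
    then obtain k where k: "k < s" "q = pr k" by blast
    have "xs!k \<notin> ival p" "xs!(2*s-1-k) \<notin> ival p"
      using B0_not_ival[OF pr_B0[OF k(1)] _ pB] unfolding pr_def by auto
    hence "xs!k < a \<or> b < xs!k" "xs!(2*s-1-k) < a \<or> b < xs!(2*s-1-k)" using ab by auto
    moreover have "x = a \<or> x = b" "y = a \<or> y = b" using x y ab by auto
    ultimately show ?thesis using mem_arc_pr[OF k(1)] k(2) ab by auto
  qed
next
  case False
  then obtain k' where k': "k' < s" "p = pr k'" using X_cases[OF p] by blast
  from X_cases[OF q] show ?thesis
  proof
    assume qB: "q \<in> B1 X"
    have "x \<notin> ival q" "y \<notin> ival q" using B0_not_ival[OF pr_B0[OF k'(1)] _ qB] x y k' by auto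
    thus ?thesis using arc_B1[OF qB] by auto
  next
    assume "\<exists>k<s. q = pr k"
    then obtain k where k: "k < s" "q = pr k" by blast
    show ?thesis using mem_pr_pr[OF k(1) k'(1)] x y k' k by auto
  qed
qed

lemma cnt_pr: "k < s \<Longrightarrow> cntX N X (xs!k) = s - k"
proof -
  assume k: "k < s"
  have "{q\<in>X. xs!k \<in> arc N q} = pr ` {k..<s}"
  proof
    show "{q\<in>X. xs!k \<in> arc N q} \<subseteq> pr ` {k..<s}"
    proof
      fix q assume q: "q \<in> {q\<in>X. xs!k \<in> arc N q}"
      from X_cases show "q \<in> pr ` {k..<s}"
      proof (cases "q \<in> B1 X")
        case True
        have "xs!k \<notin> ival q" using B0_not_ival[OF pr_B0[OF k] _ True] unfolding pr_def by auto
        thus ?thesis using q arc_B1[OF True] by auto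
      next
        case False
        then obtain k' where k': "k' < s" "q = pr k'" using X_cases q by blast
        have "xs!k \<in> pr k" unfolding pr_def by auto
        hence "k \<le> k'" using mem_pr_pr[OF k'(1) k] q k' by auto
        thus ?thesis using k' by auto
      qed
    qed
    show "pr ` {k..<s} \<subseteq> {q\<in>X. xs!k \<in> arc N q}"
    proof
      fix q assume "q \<in> pr ` {k..<s}"
      then obtain k' where k': "k \<le> k'" "k' < s" "q = pr k'" by auto
      have "xs!k \<in> pr k" unfolding pr_def by auto
      hence "xs!k \<in> arc N q" using mem_pr_pr[OF k'(2) k] k' by auto
      thus "q \<in> {q\<in>X. xs!k \<in> arc N q}" using pr_X k' by auto
    qed
  qed
  moreover have "inj_on pr {k..<s}" using pr_inj by (rule inj_on_subset) auto
  ultimately show ?thesis unfolding cntX_def using card_image by fastforce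
qed

end



definition wt :: "nat \<Rightarrow> int" where "wt k = (if even k then -2 else 2)"
definition tv :: "nat \<Rightarrow> int" where "tv s = (if even s then int s else - int s - 1)"
definition lo :: "nat \<Rightarrow> int" where "lo s = - 2 * int ((s+1) div 2)"
definition hi :: "nat \<Rightarrow> int" where "hi s = 2 * int (s div 2)"

lemma bounds: "K \<subseteq> {..<s} \<Longrightarrow> lo s \<le> sum wt K \<and> sum wt K \<le> hi s"
proof (induction s arbitrary: K)
  case 0 thus ?case by (simp add: lo_def hi_def)
next
  case (Suc s)
  have K': "K - {s} \<subseteq> {..<s}" using Suc.prems by auto
  have fin: "finite K" using Suc.prems finite_subset by blast
  have e: "sum wt K = sum wt (K - {s}) + (if s \<in> K then wt s else 0)"
    using fin by (simp add: sum.remove)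
  have d1: "(Suc s + 1) div 2 = (s+1) div 2 + (if even s then 1 else 0)" by presburger
  have d2: "Suc s div 2 = s div 2 + (if odd s then 1 else 0)" by presburger
  have l: "lo (Suc s) = lo s - (if even s then 2 else 0)" unfolding lo_def d1 by simp
  have h: "hi (Suc s) = hi s + (if odd s then 2 else 0)" unfolding hi_def d2 by simp
  have "lo s \<le> sum wt (K - {s}) \<and> sum wt (K - {s}) \<le> hi s" using Suc.IH[OF K'] .
  thus ?case using e l h by (cases "even s"; cases "s \<in> K") (simp_all add: wt_def)
qed

lemma tvsum: "sum wt {k. k < s \<and> odd (s - k)} = tv s"
proof (induction s rule: less_induct)
  case (less s)
  show ?case
  proof (cases s)
    case 0 thus ?thesis by (simp add: tv_def)
  next
    case (Suc m)
    show ?thesis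
    proof (cases m)
      case 0
      have "{k. k < s \<and> odd (s - k)} = {0}" using Suc 0 by auto
      thus ?thesis using Suc 0 by (simp add: tv_def wt_def)
    next
      case (Suc n)
      have ss: "s = n + 2" using Suc \<open>s = Suc m\<close> by auto
      have "{k. k < s \<and> odd (s - k)} = insert (n+1) {k. k < n \<and> odd (n - k)}"
        unfolding ss by (auto simp: less_Suc_eq)
      hence "sum wt {k. k < s \<and> odd (s - k)} = wt (n+1) + tv n"
        using less.IH[of n] ss by simp
      thus ?thesis unfolding ss tv_def wt_def by auto
    qed
  qed
qed

lemma lohi_even: "lo (2*a) = - 2 * int a" "hi (2*a) = 2 * int a" "tv (2*a) = 2 * int a"
  unfolding lo_def hi_def tv_def by auto
lemma lohi_odd: "lo (Suc (2*a)) = - 2 * int a - 2" "hi (Suc (2*a)) = 2 * int a" "tv (Suc (2*a)) = - 2 * int a - 2"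
  unfolding lo_def hi_def tv_def by auto

lemma trans_bounds:
  "lo sY \<le> tv sX \<Longrightarrow> tv sX \<le> hi sY \<Longrightarrow> lo sX \<le> v \<Longrightarrow> v \<le> hi sX \<Longrightarrow> lo sY \<le> v \<and> v \<le> hi sY"
  by (cases "even sX"; cases "even sY") (auto elim!: evenE oddE simp: lohi_even lohi_odd)

lemma tv_bounds: "lo s \<le> tv s \<and> tv s \<le> hi s"
  by (cases "even s") (auto elim!: evenE oddE simp: lohi_even lohi_odd)

context good begin

lemma cnt_const: "p \<in> X \<Longrightarrow> x \<in> p \<Longrightarrow> y \<in> p \<Longrightarrow> cntX N X x = cntX N X y"
proof -
  assume a: "p \<in> X" "x \<in> p" "y \<in> p"
  have "{q\<in>X. x \<in> arc N q} = {q\<in>X. y \<in> arc N q}" using arc_const[OF a] by blast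
  thus ?thesis unfolding cntX_def by simp
qed

lemma alt_B1: "p \<in> B1 X \<Longrightarrow> alt p = 0"
proof -
  assume p: "p \<in> B1 X"
  obtain a b where ab: "a < b" "p = {a,b}" "odd (b - a)" using B1_form[OF inP p] by blast
  have "b = a + (b - a)" using ab by simp
  hence "odd a \<longleftrightarrow> even b" using ab(3) by (metis even_add)
  thus ?thesis unfolding alt_def using ab by auto
qed

lemma alt_pr: "k < s \<Longrightarrow> alt (pr k) = wt k"
proof -
  assume k: "k < s"
  have d: "xs!k \<noteq> xs!(2*s-1-k)" using pr_lt[OF k] by simp
  have "even (xs!(2*s-1-k)) \<longleftrightarrow> even (xs!k)" using pr_even[OF k] pr_lt[OF k]
    by (metis even_add le_add_diff_inverse less_imp_le_nat)
  moreover have "odd (xs!k) \<longleftrightarrow> even k" using parity[OF k] .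
  ultimately show ?thesis unfolding alt_def pr_def wt_def using d by auto
qed

lemma finC: "C \<subseteq> X \<Longrightarrow> finite C" using finX finite_subset by blast

lemma alt_union:
  assumes C: "C \<subseteq> X"
  shows "alt (\<Union>C) = sum wt {k. k < s \<and> pr k \<in> C}"
proof -
  have fin: "finite C" using finC[OF C] .
  have finp: "\<And>p. p \<in> C \<Longrightarrow> finite p" using C inP unfolding inP_def
    by (metis card.infinite subsetD zero_neq_numeral)
  have "\<forall>A\<in>C. \<forall>B\<in>C. A \<noteq> B \<longrightarrow> A \<inter> B = {}" using disjX C by blast
  hence "alt (\<Union>C) = (\<Sum>p\<in>C. alt p)" unfolding alt_def
    using sum.Union_disjoint[of C "\<lambda>h. (-1::int)^h"] finp by (simp add: comp_def)
  also have "C = (C \<inter> B0 X) \<union> (C \<inter> B1 X)" using B01_cover[OF inP] C by blast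
  hence "(\<Sum>p\<in>C. alt p) = (\<Sum>p\<in>C \<inter> B0 X. alt p) + (\<Sum>p\<in>C \<inter> B1 X. alt p)"
    using fin B01_disj[of X] by (metis (no_types, lifting) Int_Un_distrib Int_empty_right finite_Int inf_commute inf_left_commute sum.union_disjoint)
  also have "(\<Sum>p\<in>C \<inter> B1 X. alt p) = 0" using alt_B1 by simp
  also have "C \<inter> B0 X = pr ` {k. k < s \<and> pr k \<in> C}" using B0_img by auto
  also have "(\<Sum>p\<in>pr ` {k. k < s \<and> pr k \<in> C}. alt p) = (\<Sum>k\<in>{k. k < s \<and> pr k \<in> C}. alt (pr k))"
    by (rule sum.reindex_cong[OF inj_on_subset[OF pr_inj]]) auto
  also have "\<dots> = sum wt {k. k < s \<and> pr k \<in> C}" using alt_pr by simp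
  finally show ?thesis by simp
qed

lemma E_union: "{h. odd (cntX N X h)} = \<Union>{p\<in>X. p \<subseteq> {h. odd (cntX N X h)}}"
proof
  show "{h. odd (cntX N X h)} \<subseteq> \<Union>{p\<in>X. p \<subseteq> {h. odd (cntX N X h)}}"
  proof
    fix h assume h: "h \<in> {h. odd (cntX N X h)}"
    have "h \<in> \<Union>X"
    proof (rule ccontr)
      assume "h \<notin> \<Union>X"
      hence "{q\<in>X. h \<in> arc N q} = {}" using arc_out by blast
      hence "cntX N X h = 0" unfolding cntX_def by (simp only: card.empty)
      thus False using h by simp
    qed
    then obtain p where p: "p \<in> X" "h \<in> p" by blast
    have "p \<subseteq> {h. odd (cntX N X h)}" using cnt_const[OF p(1) p(2)] h by auto
    thus "h \<in> \<Union>{p\<in>X. p \<subseteq> {h. odd (cntX N X h)}}" using p by auto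
  qed
qed auto

lemma alt_E: "alt {h. odd (cntX N X h)} = tv s"
proof -
  let ?E = "{h. odd (cntX N X h)}"
  have "{k. k < s \<and> pr k \<in> {p\<in>X. p \<subseteq> ?E}} = {k. k < s \<and> odd (s - k)}"
  proof -
    have "pr k \<subseteq> ?E \<longleftrightarrow> odd (s - k)" if k: "k < s" for k
    proof -
      have "xs!k \<in> pr k" unfolding pr_def by auto
      hence "\<forall>y\<in>pr k. cntX N X y = s - k" using cnt_const[OF pr_X[OF k]] cnt_pr[OF k] by metis
      thus ?thesis unfolding pr_def by auto
    qed
    thus ?thesis using pr_X by auto
  qed
  thus ?thesis using alt_union[of "{p\<in>X. p \<subseteq> ?E}"] E_union tvsum by auto
qed

lemma alt_span: "C \<subseteq> X \<Longrightarrow> lo s \<le> alt (\<Union>C) \<and> alt (\<Union>C) \<le> hi s"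
  using alt_union bounds[of "{k. k < s \<and> pr k \<in> C}" s] by auto

end



context good begin

lemma card_split: "card {q\<in>X. P q} = card {q\<in>B0 X. P q} + card {q\<in>B1 X. P q}"
proof -
  have "{q\<in>X. P q} = {q\<in>B0 X. P q} \<union> {q\<in>B1 X. P q}" using B01_cover[OF inP] by auto
  moreover have "finite {q\<in>B0 X. P q}"
    by (rule finite_subset[OF _ finX]) (use B01_sub(1)[of X] in auto)
  moreover have "finite {q\<in>B1 X. P q}"
    by (rule finite_subset[OF _ finX]) (use B01_sub(2)[of X] in auto)
  moreover have "{q\<in>B0 X. P q} \<inter> {q\<in>B1 X. P q} = {}" using B01_disj[of X] by blast
  ultimately show ?thesis by (simp add: card_Un_disjoint)
qed

lemma N_in:
  assumes oN: "odd N" and ev: "even s \<Longrightarrow> \<exists>i. even i \<and> {i,N} \<in> X"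
    and od: "odd s \<Longrightarrow> \<exists>i. odd i \<and> {i,N} \<in> X"
  shows "odd (cntX N X N)"
proof -
  have b0: "{q\<in>B0 X. N \<in> arc N q} = B0 X"
  proof -
    have "N \<in> arc N q" if "q \<in> B0 X" for q
    proof -
      have "q \<in> pr ` {..<s}" using that B0_img by simp
      then obtain k where k: "k < s" "q = pr k" by auto
      have "xs!(2*s-1-k) \<le> N" using nth_N[of "2*s-1-k"] k by auto
      thus ?thesis using mem_arc_pr[OF k(1)] k by auto
    qed
    thus ?thesis by auto
  qed
  have b1: "{q\<in>B1 X. N \<in> arc N q} = {q\<in>B1 X. N \<in> q}"
  proof -
    have "N \<in> arc N q \<longleftrightarrow> N \<in> q" if q: "q \<in> B1 X" for q
    proof -
      obtain a b where ab: "a < b" "q = {a,b}" "ival q = {a..b}" "b \<le> N"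
        using B1_form[OF inP q] by blast
      show ?thesis using arc_B1[OF q] ab by auto
    qed
    thus ?thesis by auto
  qed
  have c: "cntX N X N = s + card {q\<in>B1 X. N \<in> q}"
    unfolding cntX_def card_split b0 b1 s_def by simp
  have iN: "i < N" if "{i,N} \<in> X" "i \<noteq> N" for i
  proof -
    have "{i,N} \<subseteq> SN N" using inP that unfolding inP_def by auto
    thus ?thesis using that by (auto simp: SN_def)
  qed
  show ?thesis
  proof (cases "even s")
    case True
    then obtain i where i: "even i" "{i,N} \<in> X" using ev by blast
    have "i \<noteq> N" using i oN by auto
    hence lt: "i < N" using iN i by auto
    have "odd (N - i)" using lt i oN by auto
    hence iB: "{i,N} \<in> B1 X" using B1_iff[OF lt] i by auto
    have "{q\<in>B1 X. N \<in> q} = {{i,N}}"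
    proof
      show "{q\<in>B1 X. N \<in> q} \<subseteq> {{i,N}}"
      proof
        fix q assume q: "q \<in> {q\<in>B1 X. N \<in> q}"
        have "q \<in> X" using q B01_sub by blast
        hence "q = {i,N}" using disjX[of q "{i,N}"] i q by blast
        thus "q \<in> {{i,N}}" by simp
      qed
    qed (use iB in auto)
    thus ?thesis using c True by simp
  next
    case False
    then obtain i where i: "odd i" "{i,N} \<in> X" using od by blast
    have "i \<noteq> N"
    proof
      assume "i = N"
      hence "card {i,N} = 1" by simp
      thus False using inP i unfolding inP_def by auto
    qed
    hence lt: "i < N" using iN i by auto
    have "even (N - i)" using lt i oN by auto
    hence iB: "{i,N} \<in> B0 X" using B0_iff[OF lt] i by auto
    have "{q\<in>B1 X. N \<in> q} = {}"
    proof (rule ccontr)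
      assume "{q\<in>B1 X. N \<in> q} \<noteq> {}"
      then obtain q where q: "q \<in> B1 X" "N \<in> q" by blast
      have "q \<noteq> {i,N}" using q iB B01_disj[of X] by blast
      moreover have "q \<in> X" using q B01_sub by blast
      ultimately show False using disjX[of q "{i,N}"] i q by blast
    qed
    hence "card {q\<in>B1 X. N \<in> q} = 0" by (simp only: card.empty)
    thus ?thesis using c False by simp
  qed
qed

end

lemma Xm_good:
  assumes "X \<in> Xm N" shows "\<exists>xs. good N X xs (card (B0 X))"
proof -
  from assms have st: "starP N X" and c3: "condIII N X" unfolding Xm_def by auto
  from st obtain xs where sq: "seqOK N X xs" unfolding starP_def by blast
  have ie: "iseq N X = xs" using iseq_eq[OF sq] .
  have c1: "condI N X" using c3 unfolding condIII_def by blast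
  show ?thesis
  proof (rule exI, unfold_locales)
    show "inP N X" using st unfolding starP_def by blast
    show "\<And>p. p \<in> B1 X \<Longrightarrow> cov0 X {Min p + 1..Max p - 1}" using st unfolding starP_def by blast
    show "seqOK N X xs" using sq .
    show "card (B0 X) = card (B0 X)" ..
    show "1 \<le> card (B0 X) \<Longrightarrow> cov0 X {1..xs ! 0 - 1}"
      using c1 ie unfolding condI_def Let_def by auto
    show "1 \<le> card (B0 X) \<Longrightarrow> cov0 X {xs ! (2 * card (B0 X) - 1) + 1..N}"
      using c1 ie unfolding condI_def Let_def by auto
  qed
qed

lemma XX_inP: "Y \<in> XX N \<Longrightarrow> inP N Y"
  unfolding XX_def Xp_def Xm_def starP_def by auto

lemma step_lemma:
  assumes oN: "odd N" and X: "X \<in> Xm N" and Y: "Y \<in> XX N" and sp: "eps N X \<in> span2 Y"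
  shows "Y \<in> Xm N \<and> lo (card (B0 Y)) \<le> tv (card (B0 X)) \<and> tv (card (B0 X)) \<le> hi (card (B0 Y))"
proof -
  obtain xs where gX: "good N X xs (card (B0 X))" using Xm_good[OF X] by blast
  have c3: "condIII N X" using X unfolding Xm_def by auto
  have E: "eps N X = {h. odd (cntX N X h)}" using eps_Xm[OF X] .
  have altE: "alt (eps N X) = tv (card (B0 X))" using good.alt_E[OF gX] E by simp
  have NE: "N \<in> eps N X" using good.N_in[OF gX oN] c3 E unfolding condIII_def by auto
  from sp obtain C where C: "C \<subseteq> Y" "eps N X = fsum id C" unfolding span2_def by blast
  have iY: "inP N Y" using XX_inP[OF Y] .
  have fC: "finite C" using C(1) iY unfolding inP_def by (meson finite_subset)
  have "\<forall>p\<in>C. \<forall>q\<in>C. p \<noteq> q \<longrightarrow> p \<inter> q = {}" using C(1) iY unfolding inP_def by blast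
  hence EC: "eps N X = \<Union>C" using fsum_disj[OF fC] C(2) by simp
  have "N \<in> \<Union>Y" using NE EC C(1) by blast
  hence "Y \<notin> Xp N" unfolding Xp_def condII_def by blast
  hence YM: "Y \<in> Xm N" using Y unfolding XX_def by blast
  obtain ys where gY: "good N Y ys (card (B0 Y))" using Xm_good[OF YM] by blast
  have "lo (card (B0 Y)) \<le> alt (\<Union>C) \<and> alt (\<Union>C) \<le> hi (card (B0 Y))"
    using good.alt_span[OF gY C(1)] .
  thus ?thesis using YM altE EC by simp
qed

lemma chain:
  assumes oN: "odd N"
    and r: "(\<lambda>X Y. X \<in> XX N \<and> Y \<in> XX N \<and> eps N X \<in> span2 Y)\<^sup>*\<^sup>* a b" and a: "a \<in> Xm N"
  shows "b \<in> Xm N \<and> lo (card (B0 b)) \<le> tv (card (B0 a)) \<and> tv (card (B0 a)) \<le> hi (card (B0 b))"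
  using r
proof (induction rule: rtranclp_induct)
  case base thus ?case using a tv_bounds by blast
next
  case (step y z)
  have st: "z \<in> Xm N \<and> lo (card (B0 z)) \<le> tv (card (B0 y)) \<and> tv (card (B0 y)) \<le> hi (card (B0 z))"
    using step_lemma[OF oN] step.hyps(2) step.IH by blast
  thus ?case using trans_bounds[of "card (B0 z)" "card (B0 y)" "tv (card (B0 a))"] step.IH by blast
qed

theorem mainTheorem10:
  fixes N :: nat and t t' :: int and B B' :: "nat set set"
  assumes "odd N" and "N \<ge> 3"
    and "even t" and "even t'"
    and "B' \<in> Xtm N t'" and "B \<in> Xtm N t"
    and "preceq N B' B"
    and "t \<ge> 0"
  shows "t' = t \<or> \<bar>t' + 1\<bar> < \<bar>t + 1\<bar>"
proof -
  have BM: "B \<in> Xm N" and sB: "int (card (B0 B)) = t"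
    using assms(6,8) unfolding Xtm_def by (auto split: if_splits)
  have B'M: "B' \<in> Xm N" and tB': "tv (card (B0 B')) = t'"
  proof -
    show "B' \<in> Xm N" using assms(5) unfolding Xtm_def by (auto split: if_splits)
    show "tv (card (B0 B')) = t'"
    proof (cases "t' = 0")
      case True thus ?thesis using assms(5) unfolding Xtm_def tv_def by auto
    next
      case False
      show ?thesis
      proof (cases "t' \<ge> 2")
        case True
        hence "int (card (B0 B')) = t'" using assms(5) False unfolding Xtm_def by auto
        thus ?thesis using assms(4) unfolding tv_def by (metis even_of_nat)
      next
        case F2: False
        hence c: "t' \<le> -2" "int (card (B0 B')) = - t' - 1" using assms(5) False unfolding Xtm_def
          by (auto split: if_splits)
        have "odd (- t' - 1)" using assms(4) by simp
        hence "odd (int (card (B0 B')))" using c(2) by simp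
        hence "odd (card (B0 B'))" by simp
        thus ?thesis using c unfolding tv_def by auto
      qed
    qed
  qed
  have "lo (card (B0 B)) \<le> t' \<and> t' \<le> hi (card (B0 B))"
    using chain[OF assms(1) _ B'M] assms(7) tB' unfolding preceq_def by blast
  moreover obtain a where "card (B0 B) = 2 * a" using assms(3) sB by (metis evenE even_of_nat)
  ultimately have "- 2 * int a \<le> t' \<and> t' \<le> 2 * int a" "t = 2 * int a" using sB lohi_even by auto
  thus ?thesis by auto
qed



end
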